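(* Let $H$ be the real vector space of Hermitian matrices on a finite-dimensional system with inner product $\langle A,B\rangle=\mathrm{Tr}(AB)$. Let $\mathcal{K}\subset H$ be a proper convex cone (closed, convex, pointed, with nonempty interior) and $\mathcal{F}\subset H$ a compact set such that $\{\lambda Z:0\le\lambda\le1,\ Z\in\mathcal{F}\}$ is convex and $\mathcal{F}\cap\mathrm{int}(\mathcal{K})\neq\emptyset$. Define $R^{\mathcal{F}}_{\mathcal{K}}(\mathcal{E}):=\inf\{\lambda\in\mathbb{R}_+:\ (\mathcal{E}+\lambda\mathcal{E}')/(1+\lambda)\in\mathcal{F},\ \mathcal{E}'\in\mathcal{K}\}$ and $\mathcal{N}:=\{\mathcal{E}\in H:\ \delta Z-\mathcal{E}\notin\mathcal{K}\ \ \forall\delta<1,\ Z\in\mathcal{F}\}$. Let $\mathcal{X}\subseteq H$ be any set with $\{\lambda\varphi:\lambda\in\mathbb{R}_+,\ \varphi\in\mathcal{X}\}=\mathcal{K}^*$. If $\mathcal{E}\in\mathcal{N}$, then $$\max_{\varphi\in\mathcal{X}\setminus\{0\}}\frac{\langle\varphi,\mathcal{E}\rangle}{\max_{Z\in\mathcal{F}}\langle\varphi,Z\rangle}=1+R^{\mathcal{F}}_{\mathcal{K}}(\mathcal{E}).$$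
   Context: $\mathcal{K}^*:=\{\varphi\in H:\langle\varphi,x\rangle\ge0\ \forall x\in\mathcal{K}\}$ is the dual cone; $\mathrm{int}$ denotes interior; $\mathbb{R}_+$ the nonnegative reals. *)

theory Defs
  imports "HOL-Analysis.Analysis"
begin

definition hermitian :: "complex^'n^'n \<Rightarrow> bool" where
  "hermitian A \<longleftrightarrow> (\<forall>i j. A $ i $ j = cnj (A $ j $ i))"

definition herm_set :: "(complex^'n^'n) set" where
  "herm_set = {A. hermitian A}"

text \<open>Hilbert-Schmidt inner product <A,B> = Tr(AB) (real for Hermitian A, B).\<close>
definition hs_inner :: "complex^'n^'n \<Rightarrow> complex^'n^'n \<Rightarrow> real" where
  "hs_inner A B = Re (trace (A ** B))"

definition herm_interior :: "(complex^'n^'n) set \<Rightarrow> (complex^'n^'n) set" where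
  "herm_interior S = {x \<in> S. \<exists>e>0. \<forall>y \<in> herm_set. dist y x < e \<longrightarrow> y \<in> S}"

definition proper_cone :: "(complex^'n^'n) set \<Rightarrow> bool" where
  "proper_cone K \<longleftrightarrow> K \<subseteq> herm_set \<and> cone K \<and> convex K \<and> closed K
     \<and> (\<forall>x. x \<in> K \<and> - x \<in> K \<longrightarrow> x = 0) \<and> herm_interior K \<noteq> {}"

definition dual_cone :: "(complex^'n^'n) set \<Rightarrow> (complex^'n^'n) set" where
  "dual_cone K = {\<phi> \<in> herm_set. \<forall>x \<in> K. hs_inner \<phi> x \<ge> 0}"

definition robustness :: "(complex^'n^'n) set \<Rightarrow> (complex^'n^'n) set \<Rightarrow> complex^'n^'n \<Rightarrow> real" where
  "robustness F K E = Inf {t. (t::real) \<ge> 0 \<and>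
      (\<exists>E' \<in> K. (1 / (1 + t)) *\<^sub>R (E + t *\<^sub>R E') \<in> F)}"

definition N_set :: "(complex^'n^'n) set \<Rightarrow> (complex^'n^'n) set \<Rightarrow> (complex^'n^'n) set" where
  "N_set F K = {E \<in> herm_set. \<forall>d::real. \<forall>Z \<in> F. d < 1 \<longrightarrow> d *\<^sub>R Z - E \<notin> K}"

end

theory Submission
  imports Defs
begin

lemma hs_inner_herm:
  assumes "hermitian B" shows "hs_inner A B = A \<bullet> B"
proof -
  have "hs_inner A B = Re (\<Sum>i\<in>UNIV. \<Sum>k\<in>UNIV. A$i$k * B$k$i)"
    by (simp add: hs_inner_def trace_def matrix_matrix_mult_def)
  also have "\<dots> = (\<Sum>i\<in>UNIV. \<Sum>k\<in>UNIV. Re (A$i$k * cnj (B$i$k)))"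
  proof -
    have hB: "\<forall>i j. B $ i $ j = cnj (B $ j $ i)" using assms unfolding hermitian_def .
    have e: "\<And>i k. A$i$k * B$k$i = A$i$k * cnj (B$i$k)" using hB by metis
    show ?thesis by (simp only: e Re_sum)
  qed
  also have "\<dots> = A \<bullet> B"
    by (simp add: inner_vec_def inner_complex_def)
  finally show ?thesis .
qed

definition hp :: "complex^'n^'n \<Rightarrow> complex^'n^'n" where
  "hp a = (\<chi> i j. (a$i$j + cnj (a$j$i)) / 2)"

lemma hermitian_hp: "hermitian (hp a)"
  by (simp add: hermitian_def hp_def add.commute)

lemma inner_mat: "(a::complex^'n^'n) \<bullet> x = (\<Sum>i\<in>UNIV. \<Sum>j\<in>UNIV. Re (a$i$j * cnj (x$i$j)))"
  by (simp add: inner_vec_def inner_complex_def)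

lemma re_l1: "Re (((u + cnj v)/2) * w) = Re (u*w)/2 + Re (cnj v * w)/2" for u v w :: complex
  by (simp add: field_simps)
lemma re_l2: "Re (cnj u * v) = Re (u * cnj v)" for u v :: complex
  by simp

lemma hp_inner:
  assumes "hermitian x" shows "hp a \<bullet> x = a \<bullet> x"
proof -
  have hx: "\<forall>i j. x $ i $ j = cnj (x $ j $ i)" using assms unfolding hermitian_def .
  have h: "\<And>i j. cnj (x$i$j) = x$j$i" using hx by (metis complex_cnj_cnj)
  have "hp a \<bullet> x = (\<Sum>i\<in>UNIV. \<Sum>j\<in>UNIV. Re (a$i$j * cnj (x$i$j)) / 2 + Re (a$j$i * cnj (x$j$i)) / 2)"
    unfolding inner_mat hp_def
  proof (intro sum.cong refl)
    fix i j
    have "Re (cnj (a$j$i) * cnj (x$i$j)) = Re (a$j$i * cnj (x$j$i))"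
      by (simp only: h re_l2)
    then show "Re (((\<chi> i j. (a$i$j + cnj (a$j$i)) / 2) $ i $ j) * cnj (x$i$j)) =
      Re (a$i$j * cnj (x$i$j)) / 2 + Re (a$j$i * cnj (x$j$i)) / 2"
      by (simp only: vec_lambda_beta re_l1)
  qed
  also have "\<dots> = (\<Sum>i\<in>UNIV. \<Sum>j\<in>UNIV. Re (a$i$j * cnj (x$i$j)) / 2) + (\<Sum>i\<in>UNIV. \<Sum>j\<in>UNIV. Re (a$j$i * cnj (x$j$i)) / 2)"
    by (simp add: sum.distrib)
  also have "(\<Sum>i\<in>UNIV. \<Sum>j\<in>UNIV. Re (a$j$i * cnj (x$j$i)) / 2) = (\<Sum>i\<in>UNIV. \<Sum>j\<in>UNIV. Re (a$i$j * cnj (x$i$j)) / 2)"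
    by (rule sum.swap)
  finally show ?thesis by (simp add: inner_mat sum_divide_distrib[symmetric])
qed

lemma herm_add: "hermitian a \<Longrightarrow> hermitian b \<Longrightarrow> hermitian (a + b)"
proof (unfold hermitian_def, intro allI)
  fix i j assume "\<forall>i j. a $ i $ j = cnj (a $ j $ i)" "\<forall>i j. b $ i $ j = cnj (b $ j $ i)"
  then have "a$i$j = cnj (a$j$i)" "b$i$j = cnj (b$j$i)" by blast+
  then show "(a + b)$i$j = cnj ((a + b)$j$i)" by simp
qed
lemma herm_diff: "hermitian a \<Longrightarrow> hermitian b \<Longrightarrow> hermitian (a - b)"
proof (unfold hermitian_def, intro allI)
  fix i j assume "\<forall>i j. a $ i $ j = cnj (a $ j $ i)" "\<forall>i j. b $ i $ j = cnj (b $ j $ i)"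
  then have "a$i$j = cnj (a$j$i)" "b$i$j = cnj (b$j$i)" by blast+
  then show "(a - b)$i$j = cnj ((a - b)$j$i)" by simp
qed
lemma herm_scale: "hermitian a \<Longrightarrow> hermitian (c *\<^sub>R a)"
proof (unfold hermitian_def, intro allI)
  fix i j assume "\<forall>i j. a $ i $ j = cnj (a $ j $ i)"
  then have "a$i$j = cnj (a$j$i)" by blast
  then show "(c *\<^sub>R a)$i$j = cnj ((c *\<^sub>R a)$j$i)" by simp
qed
lemma herm_zero: "hermitian 0"
  by (simp add: hermitian_def)

lemma cone_add:
  assumes "cone K" "convex K" "x \<in> K" "y \<in> K" shows "x + y \<in> K"
proof -
  have "(1/2::real) *\<^sub>R x + (1/2::real) *\<^sub>R y \<in> K"
    using assms by (intro convexD) auto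
  then have "(2::real) *\<^sub>R ((1/2::real) *\<^sub>R x + (1/2::real) *\<^sub>R y) \<in> K"
    using assms(1) unfolding cone_def by auto
  then show ?thesis by (simp add: scaleR_add_right)
qed


theorem lemma4:
  fixes K F X :: "(complex^'n^'n) set" and E :: "complex^'n^'n"
  assumes K: "proper_cone K"
    and F_H: "F \<subseteq> herm_set" and F_compact: "compact F"
    and F_conv: "convex {t *\<^sub>R Z | t Z. 0 \<le> t \<and> t \<le> 1 \<and> Z \<in> F}"
    and F_int: "F \<inter> herm_interior K \<noteq> {}"
    and X_H: "X \<subseteq> herm_set"
    and X_gen: "{t *\<^sub>R \<phi> | t \<phi>. t \<ge> 0 \<and> \<phi> \<in> X} = dual_cone K"
    and E: "E \<in> N_set F K"
  shows "(\<exists>\<phi> \<in> X - {0}. hs_inner \<phi> E / (SUP Z\<in>F. hs_inner \<phi> Z) = 1 + robustness F K E)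
       \<and> (\<forall>\<phi> \<in> X - {0}. hs_inner \<phi> E / (SUP Z\<in>F. hs_inner \<phi> Z) \<le> 1 + robustness F K E)"
proof -
  have KH: "K \<subseteq> herm_set" and Kcone: "cone K" and Kconv: "convex K"
    using K unfolding proper_cone_def by auto
  have Kherm: "hermitian k" if "k \<in> K" for k using KH that by (auto simp: herm_set_def)
  have Fherm: "hermitian Z" if "Z \<in> F" for Z using F_H that by (auto simp: herm_set_def)
  have Eherm: "hermitian E" using E by (auto simp: N_set_def herm_set_def)
  have EN: "d *\<^sub>R Z - E \<notin> K" if "Z \<in> F" "d < 1" for d Z using E that by (auto simp: N_set_def)
  have Kscale: "c *\<^sub>R k \<in> K" if "k \<in> K" "c \<ge> 0" for c k using Kcone that unfolding cone_def by auto
  have Kadd: "x + y \<in> K" if "x \<in> K" "y \<in> K" for x y using cone_add[OF Kcone Kconv that] .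
  obtain Z0 e0 where Z0F: "Z0 \<in> F" and Z0K: "Z0 \<in> K" and e0: "e0 > 0"
    and Z0ball: "\<And>y. hermitian y \<Longrightarrow> dist y Z0 < e0 \<Longrightarrow> y \<in> K"
    using F_int unfolding herm_interior_def herm_set_def by auto
  have Fne: "F \<noteq> {}" using Z0F by auto
  define G where "G = {t *\<^sub>R Z | t Z. 0 \<le> t \<and> t \<le> 1 \<and> Z \<in> F}"
  have GF: "Z \<in> G" if "Z \<in> F" for Z unfolding G_def using that by (auto intro!: exI[of _ "1::real"])
  define T where "T = {t. (t::real) \<ge> 0 \<and> (\<exists>E' \<in> K. (1 / (1 + t)) *\<^sub>R (E + t *\<^sub>R E') \<in> F)}"
  define R where "R = robustness F K E"
  have R_def': "R = Inf T" unfolding R_def robustness_def T_def ..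
  have Tbdd: "bdd_below T" unfolding T_def by (rule bdd_belowI[of _ 0]) auto
  have Tne: "T \<noteq> {}"
  proof -
    define t where "t = 2 * norm (Z0 - E) / e0 + 1"
    have t1: "t \<ge> 1" unfolding t_def using e0 by auto
    define E' where "E' = Z0 + (1/t) *\<^sub>R (Z0 - E)"
    have "hermitian E'" unfolding E'_def
      by (intro herm_add herm_scale herm_diff Kherm Z0K Eherm)
    moreover have "dist E' Z0 < e0"
    proof -
      have "dist E' Z0 = norm (Z0 - E) / t" using t1 by (simp add: E'_def dist_norm)
      also have "\<dots> < e0"
      proof -
        have "e0 * t = 2 * norm (Z0 - E) + e0" unfolding t_def using e0 by (simp add: field_simps)
        then have "norm (Z0 - E) < e0 * t" using e0 norm_ge_zero[of "Z0 - E"] by linarith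
        then show ?thesis using t1 by (simp add: divide_less_eq mult.commute)
      qed
      finally show ?thesis .
    qed
    ultimately have "E' \<in> K" by (rule Z0ball)
    moreover have "(1 / (1 + t)) *\<^sub>R (E + t *\<^sub>R E') = Z0"
    proof -
      have "E + t *\<^sub>R E' = (1 + t) *\<^sub>R Z0" using t1
        by (simp add: E'_def scaleR_add_right scaleR_diff_right algebra_simps)
      then show ?thesis using t1 by simp
    qed
    ultimately have "t \<in> T" unfolding T_def using t1 Z0F by auto
    then show ?thesis by auto
  qed
  have R0: "R \<ge> 0" unfolding R_def' using Tne by (intro cInf_greatest) (auto simp: T_def)
  have keyB: "R \<le> l - 1" if ZF: "Z \<in> F" and lK: "l *\<^sub>R Z - E \<in> K" for l Z
  proof -
    have l1: "l \<ge> 1" using EN[OF ZF] lK by (cases "l < 1") auto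
    have mix: "R \<le> l / (1 - \<epsilon>) - 1" if eps: "0 < \<epsilon>" "\<epsilon> < 1" for \<epsilon>
    proof -
      define W where "W = (1 - \<epsilon>) *\<^sub>R Z + \<epsilon> *\<^sub>R Z0"
      have "W \<in> G" unfolding W_def using eps
        by (intro convexD[OF F_conv[folded G_def]] GF ZF Z0F) auto
      then obtain s' Z'' where Wd: "W = s' *\<^sub>R Z''" and s': "0 \<le> s'" "s' \<le> 1" and Z''F: "Z'' \<in> F"
        unfolding G_def by auto
      define \<alpha> where "\<alpha> = l * \<epsilon> / (1 - \<epsilon>)"
      have alpha: "\<alpha> > 0" unfolding \<alpha>_def using eps l1 by simp
      define c where "c = l * s' / (1 - \<epsilon>)"
      have "c *\<^sub>R Z'' = (l / (1 - \<epsilon>)) *\<^sub>R W" unfolding Wd c_def by simp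
      also have "\<dots> = l *\<^sub>R Z + \<alpha> *\<^sub>R Z0" unfolding W_def \<alpha>_def using eps
        by (simp add: scaleR_add_right)
      finally have cZ: "c *\<^sub>R Z'' - E = (l *\<^sub>R Z - E) + \<alpha> *\<^sub>R Z0" by (simp add: algebra_simps)
      have PK: "c *\<^sub>R Z'' - E \<in> K" unfolding cZ using alpha by (intro Kadd lK Kscale Z0K) auto
      have c1: "c > 1"
      proof (rule ccontr)
        assume "\<not> c > 1"
        define \<eta> where "\<eta> = \<alpha> * e0 / (2 * (norm Z'' + 1))"
        have nz: "2 * (norm Z'' + 1) > 0" by (smt (verit) norm_ge_zero)
        have eta: "\<eta> > 0" unfolding \<eta>_def using alpha e0 nz by simp
        define Y where "Y = Z0 - (\<eta> / \<alpha>) *\<^sub>R Z''"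
        have "hermitian Y" unfolding Y_def by (intro herm_diff herm_scale Fherm Z''F Kherm Z0K)
        moreover have "dist Y Z0 < e0"
        proof -
          have "dist Y Z0 = (\<eta> / \<alpha>) * norm Z''" unfolding Y_def using eta alpha by (simp add: dist_norm)
          also have "\<dots> = e0 * norm Z'' / (2 * (norm Z'' + 1))" unfolding \<eta>_def using alpha by simp
          also have "\<dots> < e0"
          proof -
            have "norm Z'' < 2 * (norm Z'' + 1)" by (smt (verit) norm_ge_zero)
            from mult_strict_left_mono[OF this e0] show ?thesis using nz
              by (simp add: pos_divide_less_eq mult.commute)
          qed
          finally show ?thesis .
        qed
        ultimately have YK: "Y \<in> K" by (rule Z0ball)
        have "(c - \<eta>) *\<^sub>R Z'' - E = (l *\<^sub>R Z - E) + \<alpha> *\<^sub>R Y"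
          using cZ alpha unfolding Y_def by (simp add: algebra_simps)
        also have "\<dots> \<in> K" using alpha by (intro Kadd lK Kscale YK) auto
        finally have "(c - \<eta>) *\<^sub>R Z'' - E \<in> K" .
        moreover have "c - \<eta> < 1" using \<open>\<not> c > 1\<close> eta by simp
        ultimately show False using EN[OF Z''F] by blast
      qed
      define t where "t = c - 1"
      have t0: "t > 0" unfolding t_def using c1 by simp
      define E' where "E' = (1 / t) *\<^sub>R (c *\<^sub>R Z'' - E)"
      have E'K: "E' \<in> K" unfolding E'_def using t0 by (intro Kscale PK) auto
      have "(1 / (1 + t)) *\<^sub>R (E + t *\<^sub>R E') = Z''"
        unfolding E'_def t_def using t0 c1 by simp
      then have "t \<in> T" unfolding T_def using t0 E'K Z''F by auto
      then have "R \<le> t" unfolding R_def' using Tbdd by (rule cInf_lower)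
      also have "t \<le> l / (1 - \<epsilon>) - 1"
      proof -
        have "c = (l / (1 - \<epsilon>)) * s'" unfolding c_def by simp
        also have "\<dots> \<le> l / (1 - \<epsilon>)"
        proof -
          have "l * s' \<le> l" using s' l1 by (simp add: mult_left_le)
          then have "l * s' / (1 - \<epsilon>) \<le> l / (1 - \<epsilon>)" using eps by (simp add: divide_right_mono)
          then show ?thesis by simp
        qed
        finally show ?thesis unfolding t_def by simp
      qed
      finally show ?thesis .
    qed
    show ?thesis
    proof (rule ccontr)
      assume "\<not> R \<le> l - 1"
      then have lR: "l < R + 1" by simp
      have Rp: "R + 1 > 0" using R0 by simp
      define q where "q = (l / (R + 1) + 1) / 2"
      have q1: "l / (R + 1) < 1" using lR Rp by (simp add: divide_less_eq)
      have q0: "l / (R + 1) > 0" using l1 Rp by simp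
      have "R \<le> l / (1 - (1 - q)) - 1" using q1 q0 unfolding q_def by (intro mix) auto
      moreover have "l / q < R + 1"
      proof -
        have "q * (R + 1) = (l + (R + 1)) / 2" unfolding q_def using Rp by (simp add: field_simps)
        then have "l < q * (R + 1)" using lR by simp
        moreover have "q > 0" unfolding q_def using q0 by simp
        ultimately show ?thesis by (simp add: divide_less_eq mult.commute)
      qed
      ultimately show False by simp
    qed
  qed
  have keyB': "R \<le> lam - 1" if "lam > 0" "0 \<le> s" "s \<le> 1" "Z \<in> F" "k \<in> K"
     "E = lam *\<^sub>R (s *\<^sub>R Z - k)" for lam s Z k
  proof -
    have "(lam * s) *\<^sub>R Z - E = lam *\<^sub>R k" using that by (simp add: algebra_simps)
    then have "R \<le> lam * s - 1" using that by (intro keyB[of Z]) (auto intro: Kscale)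
    also have "\<dots> \<le> lam - 1" using that by (simp add: mult_left_le)
    finally show ?thesis .
  qed
  have partA: "0 < (SUP Z\<in>F. hs_inner \<phi> Z) \<and> hs_inner \<phi> E / (SUP Z\<in>F. hs_inner \<phi> Z) \<le> 1 + R"
    if phiD: "\<phi> \<in> dual_cone K" and phi0: "\<phi> \<noteq> 0" for \<phi>
  proof -
    have phH: "hermitian \<phi>" and phK: "\<And>x. x \<in> K \<Longrightarrow> hs_inner \<phi> x \<ge> 0"
      using phiD unfolding dual_cone_def herm_set_def by auto
    have hsF: "hs_inner \<phi> Z = \<phi> \<bullet> Z" if "Z \<in> F" for Z using hs_inner_herm[OF Fherm[OF that]] .
    obtain B where B: "\<And>Z. Z \<in> F \<Longrightarrow> norm Z \<le> B"
      using compact_imp_bounded[OF F_compact] unfolding bounded_iff by blast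
    have bdd: "bdd_above ((\<lambda>Z. hs_inner \<phi> Z) ` F)"
    proof (rule bdd_aboveI2)
      fix Z assume ZF: "Z \<in> F"
      have "\<phi> \<bullet> Z \<le> norm \<phi> * norm Z" by (rule norm_cauchy_schwarz)
      also have "\<dots> \<le> norm \<phi> * B" using B[OF ZF] by (simp add: mult_left_mono)
      finally show "hs_inner \<phi> Z \<le> norm \<phi> * B" using hsF[OF ZF] by simp
    qed
    have npos: "norm \<phi> > 0" using phi0 by simp
    define Y where "Y = Z0 - (e0 / (2 * norm \<phi>)) *\<^sub>R \<phi>"
    have "hermitian Y" unfolding Y_def by (intro herm_diff herm_scale phH Kherm Z0K)
    moreover have "dist Y Z0 < e0"
    proof -
      have "dist Y Z0 = (e0 / (2 * norm \<phi>)) * norm \<phi>" unfolding Y_def using e0 by (simp add: dist_norm)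
      also have "\<dots> = e0 / 2" using npos by simp
      finally show ?thesis using e0 by simp
    qed
    ultimately have "Y \<in> K" by (rule Z0ball)
    then have "0 \<le> \<phi> \<bullet> Y" using phK hs_inner_herm[OF Kherm] by metis
    also have "\<phi> \<bullet> Y = \<phi> \<bullet> Z0 - (e0 / (2 * norm \<phi>)) * (norm \<phi>)\<^sup>2"
      unfolding Y_def by (simp add: inner_diff_right power2_norm_eq_inner)
    also have "(e0 / (2 * norm \<phi>)) * (norm \<phi>)\<^sup>2 = e0 * norm \<phi> / 2"
      using npos by (simp add: power2_eq_square)
    finally have "\<phi> \<bullet> Z0 > 0" using e0 npos by (smt (verit) divide_pos_pos mult_pos_pos)
    then have Z0pos: "hs_inner \<phi> Z0 > 0" using hsF[OF Z0F] by simp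
    define M where "M = (SUP Z\<in>F. hs_inner \<phi> Z)"
    have "hs_inner \<phi> Z0 \<le> M" unfolding M_def using bdd Z0F by (rule cSUP_upper2) simp
    then have Mpos: "M > 0" using Z0pos by simp
    have "hs_inner \<phi> E / M - 1 \<le> R" unfolding R_def'
    proof (rule cInf_greatest[OF Tne])
      fix t assume "t \<in> T"
      then obtain E' where t0: "t \<ge> 0" and E'K: "E' \<in> K"
        and ZF: "(1 / (1 + t)) *\<^sub>R (E + t *\<^sub>R E') \<in> F" unfolding T_def by auto
      define Z where "Z = (1 / (1 + t)) *\<^sub>R (E + t *\<^sub>R E')"
      have ZF': "Z \<in> F" using ZF unfolding Z_def .
      have "(1 + t) *\<^sub>R Z = E + t *\<^sub>R E'" unfolding Z_def using t0 by simp
      then have "(1 + t) * (\<phi> \<bullet> Z) = \<phi> \<bullet> E + t * (\<phi> \<bullet> E')"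
        by (metis inner_add_right inner_scaleR_right)
      moreover have "\<phi> \<bullet> E' \<ge> 0" using phK[OF E'K] hs_inner_herm[OF Kherm[OF E'K]] by simp
      ultimately have "\<phi> \<bullet> E \<le> (1 + t) * (\<phi> \<bullet> Z)" using t0 by (smt (verit) mult_nonneg_nonneg)
      also have "\<phi> \<bullet> Z \<le> M" unfolding M_def using hsF[OF ZF'] bdd ZF' by (metis cSUP_upper)
      then have "(1 + t) * (\<phi> \<bullet> Z) \<le> (1 + t) * M" using t0 by (simp add: mult_left_mono)
      finally have "hs_inner \<phi> E \<le> (1 + t) * M" using hs_inner_herm[OF Eherm] by simp
      then have "hs_inner \<phi> E / M \<le> 1 + t" using Mpos by (simp add: divide_le_eq)
      then show "hs_inner \<phi> E / M - 1 \<le> t" by simp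
    qed
    then show ?thesis using Mpos unfolding M_def by simp
  qed
  define \<rho> where "\<rho> = 1 + R"
  have rho0: "\<rho> > 0" unfolding \<rho>_def using R0 by simp
  define S where "S = (\<lambda>x. \<rho> *\<^sub>R x) ` (\<Union>g\<in>G. \<Union>k\<in>K. {g - k})"
  have Sconv: "convex S" unfolding S_def
    by (intro convex_scaling convex_differences) (use F_conv Kconv in \<open>auto simp: G_def\<close>)
  have SH: "hermitian y" if "y \<in> S" for y
  proof -
    from that obtain g k where g: "g \<in> G" and k: "k \<in> K" and y: "y = \<rho> *\<^sub>R (g - k)"
      unfolding S_def by auto
    from g obtain t Z where "g = t *\<^sub>R Z" "Z \<in> F" unfolding G_def by auto
    then show ?thesis using y k by (simp add: herm_scale herm_diff Fherm Kherm)
  qed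
  have inS: "\<rho> *\<^sub>R (g - k) \<in> S" if "g \<in> G" "k \<in> K" for g k
    unfolding S_def using that by blast
  have K0: "0 \<in> K" using Kscale[OF Z0K, of 0] by simp
  have G0: "0 \<in> G" unfolding G_def using Z0F by (auto intro!: exI[of _ "0::real"])
  have ES: "E \<in> closure S"
    unfolding closure_approachable
  proof (intro allI impI)
    fix d :: real assume d: "d > 0"
    define \<eta> where "\<eta> = d / (norm E + 1)"
    have eta: "\<eta> > 0" unfolding \<eta>_def using d by (simp add: add_nonneg_pos)
    have "Inf T < R + \<eta>" using eta R_def' by simp
    then obtain t where tT: "t \<in> T" and tl: "t < R + \<eta>" using cInf_lessD[OF Tne] by blast
    have tR: "R \<le> t" unfolding R_def' using tT Tbdd by (rule cInf_lower)
    from tT obtain E' where t0: "t \<ge> 0" and E'K: "E' \<in> K"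
      and ZF: "(1 / (1 + t)) *\<^sub>R (E + t *\<^sub>R E') \<in> F" unfolding T_def by auto
    define y where "y = (\<rho> / (1 + t)) *\<^sub>R E"
    have "y = \<rho> *\<^sub>R ((1 / (1 + t)) *\<^sub>R (E + t *\<^sub>R E') - (t / (1 + t)) *\<^sub>R E')"
      unfolding y_def using t0 by (simp add: scaleR_add_right scaleR_diff_right)
    moreover have "(t / (1 + t)) *\<^sub>R E' \<in> K" using t0 by (intro Kscale E'K) auto
    ultimately have yS: "y \<in> S" using inS[OF GF[OF ZF]] by simp
    have "y - E = (\<rho> / (1 + t) - 1) *\<^sub>R E" unfolding y_def by (simp add: algebra_simps)
    then have "dist y E = \<bar>\<rho> / (1 + t) - 1\<bar> * norm E" by (simp add: dist_norm)
    also have "\<bar>\<rho> / (1 + t) - 1\<bar> = (t - R) / (1 + t)"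
    proof -
      have "\<rho> / (1 + t) - 1 = (R - t) / (1 + t)" using t0 unfolding \<rho>_def by (simp add: field_simps)
      moreover have "(R - t) / (1 + t) \<le> 0" using t0 tR by (intro divide_nonpos_pos) auto
      ultimately show ?thesis using t0 tR by (simp add: abs_div_pos)
    qed
    also have "(t - R) / (1 + t) \<le> t - R" using t0 tR divide_left_mono[of 1 "1 + t" "t - R"] by simp
    then have "(t - R) / (1 + t) * norm E \<le> (t - R) * norm E" by (rule mult_right_mono) simp
    also have "(t - R) * norm E \<le> \<eta> * norm E" using tl by (simp add: mult_right_mono)
    also have "\<eta> * norm E < d"
    proof -
      have "d * norm E < d * (norm E + 1)" using d by simp
      moreover have "\<eta> * norm E = (d * norm E) / (norm E + 1)" unfolding \<eta>_def by simp
      moreover have "norm E + 1 > 0" by (simp add: add_nonneg_pos)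
      ultimately show ?thesis by (simp add: pos_divide_less_eq mult.commute)
    qed
    finally show "\<exists>y\<in>S. dist y E < d" using yS by blast
  qed
  have EnS: "E \<notin> rel_interior S"
  proof
    assume "E \<in> rel_interior S"
    then obtain e where "E \<in> S" and e: "e > 0" and sub: "ball E e \<inter> affine hull S \<subseteq> S"
      unfolding mem_rel_interior_ball by blast
    define \<epsilon> where "\<epsilon> = e / (2 * (norm E + 1))"
    have eps: "\<epsilon> > 0" unfolding \<epsilon>_def using e by (simp add: add_nonneg_pos)
    have "0 \<in> S" using inS[OF G0 K0] by simp
    then have "(1 + \<epsilon>) *\<^sub>R E + (- \<epsilon>) *\<^sub>R 0 \<in> affine hull S"
      using \<open>E \<in> S\<close> by (intro mem_affine[OF affine_affine_hull]) (auto intro: hull_inc)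
    moreover have "dist E ((1 + \<epsilon>) *\<^sub>R E) < e"
    proof -
      have "dist E ((1 + \<epsilon>) *\<^sub>R E) = \<epsilon> * norm E" using eps
        by (simp add: dist_norm algebra_simps)
      also have "\<dots> < e"
      proof -
        have "norm E < 2 * (norm E + 1)" by (smt (verit) norm_ge_zero)
        from mult_strict_left_mono[OF this e] have "e * norm E < e * (2 * (norm E + 1))" .
        moreover have "\<epsilon> * norm E = (e * norm E) / (2 * (norm E + 1))" unfolding \<epsilon>_def by simp
        moreover have "2 * (norm E + 1) > 0" by (simp add: add_nonneg_pos)
        ultimately show ?thesis by (simp add: pos_divide_less_eq mult.commute)
      qed
      finally show ?thesis .
    qed
    ultimately have "(1 + \<epsilon>) *\<^sub>R E \<in> S" using sub by auto
    then obtain g k where g: "g \<in> G" and k: "k \<in> K" and P: "(1 + \<epsilon>) *\<^sub>R E = \<rho> *\<^sub>R (g - k)"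
      unfolding S_def by auto
    from g obtain s Z where gs: "g = s *\<^sub>R Z" "0 \<le> s" "s \<le> 1" "Z \<in> F" unfolding G_def by auto
    have "E = (\<rho> / (1 + \<epsilon>)) *\<^sub>R (s *\<^sub>R Z - k)"
    proof -
      have "E = (1 / (1 + \<epsilon>)) *\<^sub>R ((1 + \<epsilon>) *\<^sub>R E)" using eps by simp
      also have "\<dots> = (\<rho> / (1 + \<epsilon>)) *\<^sub>R (s *\<^sub>R Z - k)" unfolding P gs(1) by simp
      finally show ?thesis .
    qed
    then have "R \<le> \<rho> / (1 + \<epsilon>) - 1"
      using rho0 eps gs k by (intro keyB') (auto intro: divide_pos_pos)
    moreover have "\<rho> / (1 + \<epsilon>) < \<rho>" using rho0 eps by (simp add: divide_less_eq)
    ultimately show False unfolding \<rho>_def by linarith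
  qed
  obtain a where "a \<noteq> 0" and a1: "\<And>y. y \<in> closure S \<Longrightarrow> a \<bullet> E \<le> a \<bullet> y"
    and a2: "\<And>y. y \<in> rel_interior S \<Longrightarrow> a \<bullet> E < a \<bullet> y"
    using supporting_hyperplane_relative_frontier[OF Sconv ES EnS] by blast
  define \<phi> where "\<phi> = - hp a"
  have phiH: "hermitian \<phi>" unfolding \<phi>_def using herm_scale[OF hermitian_hp, of "-1" a] by simp
  have phiI: "\<phi> \<bullet> y = - (a \<bullet> y)" if "hermitian y" for y
    unfolding \<phi>_def using hp_inner[OF that] by simp
  have phiS: "\<phi> \<bullet> y \<le> \<phi> \<bullet> E" if "y \<in> S" for y
    using a1[of y] that closure_subset[of S] phiI[OF SH[OF that]] phiI[OF Eherm] by auto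
  have phi0: "\<phi> \<noteq> 0"
  proof -
    have "S \<noteq> {}" unfolding S_def using GF[OF Z0F] Z0K by auto
    then obtain y0 where y0: "y0 \<in> rel_interior S" using rel_interior_eq_empty[OF Sconv] by auto
    then have "y0 \<in> S" using rel_interior_subset by auto
    then have "\<phi> \<bullet> y0 < \<phi> \<bullet> E" using a2[OF y0] phiI[OF SH] phiI[OF Eherm] by auto
    then show ?thesis by auto
  qed
  have phiK: "\<phi> \<in> dual_cone K"
  proof -
    have "hs_inner \<phi> k \<ge> 0" if kK: "k \<in> K" for k
    proof (rule ccontr)
      assume "\<not> hs_inner \<phi> k \<ge> 0"
      then have neg: "\<phi> \<bullet> k < 0" using hs_inner_herm[OF Kherm[OF kK]] by simp
      define c where "c = (\<bar>\<phi> \<bullet> E\<bar> + 1) / (\<rho> * (- (\<phi> \<bullet> k)))"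
      have c0: "c \<ge> 0" unfolding c_def using neg rho0 by (intro divide_nonneg_pos) (auto simp: mult_pos_neg)
      have "\<rho> *\<^sub>R (0 - c *\<^sub>R k) \<in> S" using inS[OF G0 Kscale[OF kK c0]] .
      from phiS[OF this] have "- (\<rho> * c * (\<phi> \<bullet> k)) \<le> \<phi> \<bullet> E" by simp
      moreover have "\<rho> * c * (\<phi> \<bullet> k) = - (\<bar>\<phi> \<bullet> E\<bar> + 1)"
        unfolding c_def using neg rho0 by (simp add: field_simps)
      ultimately show False by linarith
    qed
    then show ?thesis using phiH unfolding dual_cone_def herm_set_def by auto
  qed
  have phiF: "\<rho> * (\<phi> \<bullet> Z) \<le> \<phi> \<bullet> E" if "Z \<in> F" for Z
    using phiS[OF inS[OF GF[OF that] K0]] by simp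
  obtain c \<psi> where c: "c \<ge> 0" and psiX: "\<psi> \<in> X" and phic: "\<phi> = c *\<^sub>R \<psi>"
    using phiK X_gen[symmetric] by auto
  have cpos: "c > 0" using c phic phi0 by (cases "c = 0") auto
  have psi0: "\<psi> \<noteq> 0" using phic phi0 by auto
  have psiK: "\<psi> \<in> dual_cone K" using X_gen psiX by (force intro: exI[of _ "1::real"])
  have psiF: "\<rho> * (hs_inner \<psi> Z) \<le> hs_inner \<psi> E" if "Z \<in> F" for Z
  proof -
    have "c * (\<rho> * (\<psi> \<bullet> Z)) \<le> c * (\<psi> \<bullet> E)" using phiF[OF that] by (simp add: phic mult.left_commute)
    then have "\<rho> * (\<psi> \<bullet> Z) \<le> \<psi> \<bullet> E" using cpos by simp
    then show ?thesis using hs_inner_herm[OF Fherm[OF that]] hs_inner_herm[OF Eherm] by simp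
  qed
  have A: "0 < (SUP Z\<in>F. hs_inner \<psi> Z)" "hs_inner \<psi> E / (SUP Z\<in>F. hs_inner \<psi> Z) \<le> \<rho>"
    using partA[OF psiK psi0] unfolding \<rho>_def by auto
  have "\<rho> * (SUP Z\<in>F. hs_inner \<psi> Z) \<le> hs_inner \<psi> E"
  proof -
    have "(SUP Z\<in>F. hs_inner \<psi> Z) \<le> hs_inner \<psi> E / \<rho>"
      using psiF rho0 Fne by (intro cSUP_least) (auto simp: field_simps)
    then show ?thesis using rho0 by (simp add: field_simps)
  qed
  then have "hs_inner \<psi> E / (SUP Z\<in>F. hs_inner \<psi> Z) \<ge> \<rho>" using A(1) by (simp add: field_simps)
  then have "hs_inner \<psi> E / (SUP Z\<in>F. hs_inner \<psi> Z) = 1 + robustness F K E"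
    using A(2) unfolding \<rho>_def R_def by linarith
  moreover have "\<forall>\<phi> \<in> X - {0}. hs_inner \<phi> E / (SUP Z\<in>F. hs_inner \<phi> Z) \<le> 1 + robustness F K E"
  proof
    fix \<phi>' assume "\<phi>' \<in> X - {0}"
    moreover then have "\<phi>' \<in> dual_cone K" using X_gen by (force intro: exI[of _ "1::real"])
    ultimately show "hs_inner \<phi>' E / (SUP Z\<in>F. hs_inner \<phi>' Z) \<le> 1 + robustness F K E"
      using partA unfolding R_def by auto
  qed
  ultimately show ?thesis using psiX psi0 by blast
qed

end
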